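(* Let $f\in\mathcal A_+(1)$ satisfy $\|f\|_{L^1(\mathbb{R})}=1$, $\widehat f=f$, $f(0)=0$, and $r(f)\in[\tfrac14,\tfrac1{\sqrt2}]$. Then for every $x\in(0,r(f)]$, $$f_+(x)\le \frac12+\frac{\sin\!\big(2\pi(r(f)-\tfrac14)x\big)-\sin(2\pi r(f)x)}{\pi x}.$$
   Context: Fourier transform: $\widehat f(\xi)=\int_{\mathbb{R}} f(x)e^{-2\pi i x\xi}\,dx$. $r(f):=\inf\{r>0: f(x)\ge 0 \text{ for all } |x|\ge r\}$. $\mathcal A_+(1)$ is the set of $f:\mathbb{R}\to\mathbb{R}$ with $f,\widehat f\in L^1(\mathbb{R})$, $\widehat f$ real-valued, $f$ eventually nonnegative (i.e. $\ge0$ for all large $|x|$) with $\widehat f(0)\le0$, and $\widehat f$ eventually nonnegative with $f(0)\le0$. $f_+:=\max\{f,0\}$. *)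

theory Defs
  imports "HOL-Analysis.Analysis"
begin

definition fourier :: "(real \<Rightarrow> real) \<Rightarrow> real \<Rightarrow> complex" where
  "fourier f \<xi> = (LINT x|lborel. complex_of_real (f x) * cis (- 2 * pi * x * \<xi>))"

definition eventually_nonneg :: "(real \<Rightarrow> real) \<Rightarrow> bool" where
  "eventually_nonneg g \<longleftrightarrow> (\<exists>R. \<forall>x. \<bar>x\<bar> \<ge> R \<longrightarrow> g x \<ge> 0)"

definition rad :: "(real \<Rightarrow> real) \<Rightarrow> real" where
  "rad f = Inf {r. r > 0 \<and> (\<forall>x. \<bar>x\<bar> \<ge> r \<longrightarrow> f x \<ge> 0)}"

definition A_plus_1 :: "(real \<Rightarrow> real) set" where
  "A_plus_1 = {f. integrable lborel f
      \<and> (\<forall>\<xi>. Im (fourier f \<xi>) = 0)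
      \<and> integrable lborel (\<lambda>\<xi>. Re (fourier f \<xi>))
      \<and> eventually_nonneg f \<and> Re (fourier f 0) \<le> 0
      \<and> eventually_nonneg (\<lambda>\<xi>. Re (fourier f \<xi>)) \<and> f 0 \<le> 0}"

definition pos_part :: "(real \<Rightarrow> real) \<Rightarrow> real \<Rightarrow> real" where
  "pos_part f x = max (f x) 0"

end

theory Submission
  imports Defs
begin

lemma FTCcos:
  fixes x a b :: real assumes "x > 0" "a \<le> b"
  shows "(LBINT t. indicator {a..b} t * cos (2*pi*x*t)) = (sin (2*pi*x*b) - sin (2*pi*x*a)) / (2*pi*x)"
proof -
  have "(LBINT t. indicator {a..b} t *\<^sub>R cos (2*pi*x*t)) = (\<lambda>t. sin (2*pi*x*t) / (2*pi*x)) b - (\<lambda>t. sin (2*pi*x*t) / (2*pi*x)) a"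
  proof (rule integral_FTC_atLeastAtMost[OF assms(2)])
    fix t assume "a \<le> t" "t \<le> b"
    have "((\<lambda>t. sin (2*pi*x*t) / (2*pi*x)) has_real_derivative cos (2*pi*x*t)) (at t within {a..b})"
      using assms(1) by (auto intro!: derivative_eq_intros)
    then show "((\<lambda>t. sin (2*pi*x*t) / (2*pi*x)) has_vector_derivative cos (2*pi*x*t)) (at t within {a..b})"
      by (simp add: has_real_derivative_iff_has_vector_derivative)
  next
    show "continuous_on {a..b} (\<lambda>t. cos (2*pi*x*t))" by (intro continuous_intros)
  qed
  then show ?thesis by (simp add: diff_divide_distrib)
qed

lemma FTC1:
  fixes a b :: real assumes "a \<le> b"
  shows "(LBINT t. indicator {a..b} t) = b - a"
  using integral_FTC_atLeastAtMost[OF assms, of "\<lambda>t. t" "\<lambda>_. 1"]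
  by (auto simp: has_real_derivative_iff_has_vector_derivative[symmetric] intro!: derivative_eq_intros)

lemma int_mult_bdd:
  fixes g h :: "real \<Rightarrow> real"
  assumes "integrable lborel g" "continuous_on UNIV h" "\<And>t. \<bar>h t\<bar> \<le> 1"
  shows "integrable lborel (\<lambda>t. g t * h t)"
proof (rule Bochner_Integration.integrable_bound[OF assms(1)])
  have "g \<in> borel_measurable lborel" using assms(1) by (rule borel_measurable_integrable)
  moreover have "h \<in> borel_measurable lborel" using assms(2) by (simp add: borel_measurable_continuous_onI)
  ultimately show "(\<lambda>t. g t * h t) \<in> borel_measurable lborel" by (rule borel_measurable_times)
  have "norm (g t * h t) \<le> norm (g t)" for t
    using assms(3)[of t] by (simp add: abs_mult mult_left_le)
  then show "AE t in lborel. norm (g t * h t) \<le> norm (g t)" by simp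
qed

lemma rad_nonneg:
  assumes "eventually_nonneg f" "\<bar>t\<bar> > rad f"
  shows "f t \<ge> 0"
proof -
  define S where "S = {r. r > 0 \<and> (\<forall>x. \<bar>x\<bar> \<ge> r \<longrightarrow> f x \<ge> 0)}"
  obtain R where R: "\<forall>x. \<bar>x\<bar> \<ge> R \<longrightarrow> f x \<ge> 0" using assms(1) unfolding eventually_nonneg_def by blast
  have "max R 1 \<in> S" using R unfolding S_def by auto
  hence ne: "S \<noteq> {}" by blast
  have bdd: "bdd_below S" unfolding S_def by (rule bdd_belowI[of _ 0]) auto
  have "Inf S < \<bar>t\<bar>" using assms(2) unfolding rad_def S_def by simp
  then obtain s where "s \<in> S" "s < \<bar>t\<bar>" using cInf_less_iff[OF ne bdd] by blast
  then show ?thesis unfolding S_def by auto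
qed

lemma reml: "Re (complex_of_real a * cis y) = a * cos y"
  by (simp only: times_complex.sel Re_complex_of_real Im_complex_of_real cis.sel mult_zero_left diff_0_right)

lemma fourier_cos:
  assumes int: "integrable lborel f" and ff: "fourier f \<xi> = complex_of_real (f \<xi>)"
  shows "f \<xi> = (LINT t|lborel. f t * cos (2*pi*\<xi>*t))"
proof -
  have fm: "f \<in> borel_measurable lborel" using int by (rule borel_measurable_integrable)
  have ma: "(\<lambda>t. complex_of_real (f t)) \<in> borel_measurable lborel"
    using measurable_compose[OF fm borel_measurable_of_real] by (simp add: o_def)
  have mb: "(\<lambda>x. cis (- 2 * pi * x * \<xi>)) \<in> borel_measurable lborel"
    unfolding measurable_lborel2 by (intro borel_measurable_continuous_onI continuous_intros)
  have ci: "integrable lborel (\<lambda>t. complex_of_real (f t) * cis (- 2 * pi * t * \<xi>))"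
  proof (rule Bochner_Integration.integrable_bound[of _ "\<lambda>t. complex_of_real (f t)"])
    show "integrable lborel (\<lambda>t. complex_of_real (f t))" using int by (rule integrable_of_real)
    show "(\<lambda>t. complex_of_real (f t) * cis (- 2 * pi * t * \<xi>)) \<in> borel_measurable lborel"
      using ma mb by (rule borel_measurable_times)
    have "norm (complex_of_real (f t) * cis (- 2 * pi * t * \<xi>)) \<le> norm (complex_of_real (f t))" for t
      by (simp add: norm_mult)
    then show "AE t in lborel. norm (complex_of_real (f t) * cis (- 2 * pi * t * \<xi>)) \<le> norm (complex_of_real (f t))"
      by simp
  qed
  have "f \<xi> = Re (fourier f \<xi>)" using ff by simp
  also have "\<dots> = (LINT t|lborel. Re (complex_of_real (f t) * cis (- 2 * pi * t * \<xi>)))"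
    unfolding fourier_def by (rule integral_Re[OF ci, symmetric])
  also have "\<dots> = (LINT t|lborel. f t * cos (2*pi*\<xi>*t))"
  proof (rule Bochner_Integration.integral_cong[OF refl])
    fix t
    have "cos (- 2 * pi * t * \<xi>) = cos (2*pi*\<xi>*t)"
    proof -
      have "- 2 * pi * t * \<xi> = - (2*pi*\<xi>*t)" by (simp add: mult_ac)
      then show ?thesis by (simp only: cos_minus)
    qed
    then show "Re (complex_of_real (f t) * cis (- 2 * pi * t * \<xi>)) = f t * cos (2*pi*\<xi>*t)"
      by (simp only: reml)
  qed
  finally show ?thesis .
qed

theorem lemma2:
  fixes f :: "real \<Rightarrow> real"
  assumes "f \<in> A_plus_1"
    and "(LINT x|lborel. \<bar>f x\<bar>) = 1"
    and "\<forall>\<xi>. fourier f \<xi> = complex_of_real (f \<xi>)"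
    and "f 0 = 0"
    and "1/4 \<le> rad f" and "rad f \<le> 1 / sqrt 2"
  shows "\<forall>x. 0 < x \<and> x \<le> rad f \<longrightarrow>
           pos_part f x \<le> 1/2 + (sin (2 * pi * (rad f - 1/4) * x) - sin (2 * pi * rad f * x)) / (pi * x)"
proof (intro allI impI, elim conjE)
  fix x :: real assume x0: "0 < x" and xr: "x \<le> rad f"
  define r where "r = rad f"
  define a where "a = r - 1/4"
  have xr': "x \<le> r" using xr unfolding r_def .
  have a0: "0 \<le> a" and ar: "a \<le> r" using assms(5) unfolding a_def r_def by auto
  have int: "integrable lborel f" and evn: "eventually_nonneg f"
    using assms(1) unfolding A_plus_1_def by auto
  have fm[measurable]: "f \<in> borel_measurable lborel" using int by (rule borel_measurable_integrable)
  have fc: "f \<xi> = (LINT t|lborel. f t * cos (2*pi*\<xi>*t))" for \<xi>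
    using fourier_cos[OF int] assms(3) by blast
  have int0: "(LINT t|lborel. f t) = 0" using fc[of 0] assms(4) by simp
  have bnd: "\<bar>f t\<bar> \<le> 1" for t
  proof -
    have "\<bar>f t\<bar> = norm (fourier f t)" using assms(3) by simp
    also have "\<dots> \<le> (LINT u|lborel. norm (complex_of_real (f u) * cis (- 2 * pi * u * t)))"
      unfolding fourier_def by (rule integral_norm_bound)
    also have "\<dots> = (LINT u|lborel. \<bar>f u\<bar>)" by (simp add: norm_mult)
    finally show ?thesis using assms(2) by simp
  qed
  define c where "c t = cos (2*pi*x*t)" for t
  define fp where "fp t = (\<bar>f t\<bar> + f t) / 2" for t
  define fn where "fn t = (\<bar>f t\<bar> - f t) / 2" for t
  define ch where "ch t = (indicator {-r..-a} t + indicator {a..r} t :: real)" for t :: real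
  define k where "k = cos (2*pi*x*a)"
  have cc: "continuous_on UNIV c" unfolding c_def by (intro continuous_intros)
  have c1: "\<bar>c t\<bar> \<le> 1" for t unfolding c_def by simp
  have ifp: "integrable lborel fp" unfolding fp_def using int by simp
  have ifn: "integrable lborel fn" unfolding fn_def using int by simp
  have ifpc: "integrable lborel (\<lambda>t. fp t * c t)" by (rule int_mult_bdd[OF ifp cc c1])
  have ifnc: "integrable lborel (\<lambda>t. fn t * c t)" by (rule int_mult_bdd[OF ifn cc c1])
  have ii1: "integrable lborel (\<lambda>t. c t * indicator {-r..-a} t)"
    by (rule borel_integrable_atLeastAtMost) (simp add: c_def)
  have ii2: "integrable lborel (\<lambda>t. c t * indicator {a..r} t)"
    by (rule borel_integrable_atLeastAtMost) (simp add: c_def)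
  have ij1: "integrable lborel (\<lambda>t. 1 * indicator {-r..-a} t :: real)"
    by (rule borel_integrable_atLeastAtMost) simp
  have ij2: "integrable lborel (\<lambda>t. 1 * indicator {a..r} t :: real)"
    by (rule borel_integrable_atLeastAtMost) simp
  have ich: "integrable lborel ch" using ij1 ij2 unfolding ch_def by simp
  have ichc: "integrable lborel (\<lambda>t. ch t * c t)"
  proof -
    have "integrable lborel (\<lambda>t. c t * indicator {-r..-a} t + c t * indicator {a..r} t)"
      using ii1 ii2 by simp
    then show ?thesis unfolding ch_def by (simp add: algebra_simps)
  qed
  have Ip: "(LINT t|lborel. fp t) = 1/2"
    unfolding fp_def using int assms(2) int0 by (simp add: Bochner_Integration.integral_add)
  have In: "(LINT t|lborel. fn t) = 1/2"
    unfolding fn_def using int assms(2) int0 by (simp add: Bochner_Integration.integral_diff)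
  have Ich: "(LINT t|lborel. ch t) = 1/2"
  proof -
    have "(LINT t|lborel. ch t) = (LINT t|lborel. indicator {-r..-a} t) + (LINT t|lborel. indicator {a..r} t)"
      unfolding ch_def using ij1 ij2 by (simp add: Bochner_Integration.integral_add)
    also have "\<dots> = (-a - -r) + (r - a)" using ar by (simp add: FTC1)
    finally show ?thesis unfolding a_def by simp
  qed
  have Ichc: "(LINT t|lborel. ch t * c t) = (sin (2*pi*x*r) - sin (2*pi*x*a)) / (pi*x)"
  proof -
    have "(LINT t|lborel. ch t * c t) = (LINT t|lborel. indicator {-r..-a} t * c t) + (LINT t|lborel. indicator {a..r} t * c t)"
      unfolding ch_def using ii1 ii2 by (simp add: Bochner_Integration.integral_add algebra_simps)
    also have "\<dots> = (sin (2*pi*x*(-a)) - sin (2*pi*x*(-r))) / (2*pi*x) + (sin (2*pi*x*r) - sin (2*pi*x*a)) / (2*pi*x)"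
      unfolding c_def using ar x0 by (simp add: FTCcos)
    also have "\<dots> = (sin (2*pi*x*r) - sin (2*pi*x*a)) / (pi*x)"
      using x0 by (simp add: field_simps)
    finally show ?thesis .
  qed
  have dec: "f x = (LINT t|lborel. fp t * c t) - (LINT t|lborel. fn t * c t)"
  proof -
    have "f x = (LINT t|lborel. fp t * c t - fn t * c t)"
    proof -
      have "fp t - fn t = f t" for t unfolding fp_def fn_def by (simp add: field_simps)
      then have "fp t * c t - fn t * c t = f t * cos (2*pi*x*t)" for t
        unfolding c_def by (metis left_diff_distrib)
      then show ?thesis unfolding fc[of x] by simp
    qed
    also have "\<dots> = (LINT t|lborel. fp t * c t) - (LINT t|lborel. fn t * c t)"
      using ifpc ifnc by (rule Bochner_Integration.integral_diff)
    finally show ?thesis .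
  qed
  have P: "(LINT t|lborel. fp t * c t) \<le> 1/2"
  proof -
    have "(LINT t|lborel. fp t * c t) \<le> (LINT t|lborel. fp t)"
    proof (rule integral_mono[OF ifpc ifp])
      fix t
      have "fp t \<ge> 0" unfolding fp_def by simp
      moreover have "c t \<le> 1" using c1[of t] by simp
      ultimately show "fp t * c t \<le> fp t" by (simp add: mult_left_le)
    qed
    then show ?thesis using Ip by simp
  qed
  have Q: "(LINT t|lborel. ch t * c t) \<le> 1/2"
  proof -
    have "(LINT t|lborel. ch t * c t) \<le> (LINT t|lborel. ch t)"
    proof (rule integral_mono[OF ichc ich])
      fix t
      have "ch t \<ge> 0" unfolding ch_def by simp
      moreover have "c t \<le> 1" using c1[of t] by simp
      ultimately show "ch t * c t \<le> ch t" by (simp add: mult_left_le)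
    qed
    then show ?thesis using Ich by simp
  qed
  have r2: "r * r \<le> 1/2"
  proof -
    have "r * r \<le> (1/sqrt 2) * (1/sqrt 2)"
      using assms(5,6) unfolding r_def by (intro mult_mono) auto
    then show ?thesis by simp
  qed
  have cabs: "c t = cos (2*pi*x*\<bar>t\<bar>)" for t
    unfolding c_def by (cases "t \<ge> 0") auto
  have cle: "cos (2*pi*x*q) \<le> cos (2*pi*x*p)" if "0 \<le> p" "p \<le> q" "q \<le> r" for p q
  proof (rule cos_monotone_0_pi_le)
    show "0 \<le> 2*pi*x*p" using that x0 by simp
    show "2*pi*x*p \<le> 2*pi*x*q" using that x0 by simp
    have "x * q \<le> r * r" using that x0 xr' by (intro mult_mono) auto
    then have "x * q \<le> 1/2" using r2 by simp
    then have "2*pi*(x*q) \<le> 2*pi*(1/2)" by (intro mult_left_mono) auto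
    then show "2*pi*x*q \<le> pi" by (simp add: mult_ac)
  qed
  have pw: "(fn t - ch t) * (c t - k) \<ge> 0" if t0: "t \<noteq> 0" for t
  proof -
    have chv: "ch t = (if a \<le> \<bar>t\<bar> \<and> \<bar>t\<bar> \<le> r then 1 else 0)"
      unfolding ch_def using t0 a0 by (cases "t > 0") (auto simp: indicator_def)
    consider "\<bar>t\<bar> > r" | "a \<le> \<bar>t\<bar> \<and> \<bar>t\<bar> \<le> r" | "\<bar>t\<bar> < a" by linarith
    then show ?thesis
    proof cases
      case 1
      have "f t \<ge> 0" using rad_nonneg[OF evn] 1 unfolding r_def by blast
      then have "fn t = 0" unfolding fn_def by simp
      moreover have "ch t = 0" using chv 1 by simp
      ultimately show ?thesis by simp
    next
      case 2
      have "fn t \<le> 1" using bnd[of t] unfolding fn_def by simp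
      moreover have "ch t = 1" using chv 2 by simp
      moreover have "c t \<le> k" unfolding cabs k_def using cle[of a "\<bar>t\<bar>"] 2 a0 by simp
      ultimately show ?thesis by (simp add: mult_nonpos_nonpos)
    next
      case 3
      have "fn t \<ge> 0" unfolding fn_def by simp
      moreover have "ch t = 0" using chv 3 by simp
      moreover have "c t \<ge> k" unfolding cabs k_def using cle[of "\<bar>t\<bar>" a] 3 ar by simp
      ultimately show ?thesis by simp
    qed
  qed
  have B0: "0 \<le> (LINT t|lborel. (fn t - ch t) * (c t - k))"
    by (rule integral_nonneg_AE) (use AE_lborel_singleton[of 0] pw in \<open>auto elim!: eventually_mono\<close>)
  have B1: "(LINT t|lborel. (fn t - ch t) * (c t - k)) =
      (LINT t|lborel. fn t * c t) - (LINT t|lborel. ch t * c t) - k * (LINT t|lborel. fn t) + k * (LINT t|lborel. ch t)"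
  proof -
    have "(LINT t|lborel. (fn t - ch t) * (c t - k)) =
        (LINT t|lborel. (fn t * c t - ch t * c t) + (k * ch t - k * fn t))"
      by (rule Bochner_Integration.integral_cong) (auto simp: algebra_simps)
    also have "\<dots> = (LINT t|lborel. fn t * c t - ch t * c t) + (LINT t|lborel. k * ch t - k * fn t)"
      using ifnc ichc ich ifn by (intro Bochner_Integration.integral_add) auto
    also have "\<dots> = ((LINT t|lborel. fn t * c t) - (LINT t|lborel. ch t * c t)) + ((LINT t|lborel. k * ch t) - (LINT t|lborel. k * fn t))"
      using ifnc ichc ich ifn by (simp add: Bochner_Integration.integral_diff)
    also have "\<dots> = (LINT t|lborel. fn t * c t) - (LINT t|lborel. ch t * c t) - k * (LINT t|lborel. fn t) + k * (LINT t|lborel. ch t)"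
      using ich ifn by simp
    finally show ?thesis .
  qed
  have B: "(LINT t|lborel. ch t * c t) \<le> (LINT t|lborel. fn t * c t)"
    using B0 B1 In Ich by simp
  have fx: "f x \<le> 1/2 - (sin (2*pi*x*r) - sin (2*pi*x*a)) / (pi*x)"
    using dec P B Ichc by linarith
  have R0: "0 \<le> 1/2 - (sin (2*pi*x*r) - sin (2*pi*x*a)) / (pi*x)"
    using Q Ichc by linarith
  have eq: "1/2 + (sin (2 * pi * (rad f - 1/4) * x) - sin (2 * pi * rad f * x)) / (pi * x)
      = 1/2 - (sin (2*pi*x*r) - sin (2*pi*x*a)) / (pi*x)"
    unfolding a_def r_def by (simp add: mult_ac diff_divide_distrib)
  show "pos_part f x \<le> 1/2 + (sin (2 * pi * (rad f - 1/4) * x) - sin (2 * pi * rad f * x)) / (pi * x)"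
    unfolding eq pos_part_def using fx R0 by simp
qed

end
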